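(* Let $M$ be a tall or square ACI-matrix over a field $\mathbb{F}$, and let $F_1,F_2$ be two disjoint semifactor sets of $M$. Then $F_1\cap F_2$ and $F_1\cup F_2$ are semifactor sets of $M$.
   Context: Let $\mathbb{F}$ be a field. An ACI-matrix is a matrix with entries in $\mathbb{F}[x_1,\dots,x_k]$ whose entries are polynomials of degree at most one and such that no indeterminate appears in two different columns. Tall/square means more rows than columns / equal numbers. A completion is an assignment of values in $\mathbb{F}$ to all indeterminates; $\mathrm{maxRank}(N)$ is the maximum rank of a completion. ACI-matrices (and blocks) of size $0\times q$ ($q>0$, wide degenerate), $p\times 0$ ($p>0$, tall degenerate) and $0\times0$ (void) are allowed. $N$ is FRmR if $\mathrm{maxRank}(N)=\mathrm{rows}(N)$, FCmR if $\mathrm{maxRank}(N)=\mathrm{cols}(N)$; by convention tall degenerate is FRmR, wide degenerate is FCmR, void is both. For an $m\times n$ block matrix $\begin{bmatrix} A & B\\ 0 & C\end{bmatrix}$ with lower-left $r\times s$ zero block, the zero block is Medium if $r+s=\max\{m,n\}$. For $F=\{f_1<\dots<f_s\}\subseteq\{1,\dots,n\}$ with complement $\{g_1<\dots<g_{n-s}\}$, $Q_F$ is the $n\times n$ permutation matrix such that $MQ_F$ has as columns $f_1,\dots,f_s,g_1,\dots,g_{n-s}$ of $M$ in that order. For an $m\times n$ ACI-matrix $M$, $F$ is a semifactor set of $M$ if there is a nonsingular constant $m\times m$ matrix $R$ with $RMQ_F=\begin{bmatrix} A & B\\ 0 & C\end{bmatrix}$, where $A$ has $\#F$ columns, the zero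 block is Medium, $A$ is FRmR and $C$ is FCmR. *)

theory Defs
  imports "Jordan_Normal_Form.DL_Rank"
begin

text \<open>An ACI-matrix with entries in F[x_0,...,x_(k-1)] of degree at most one is represented
  by its coefficient matrices: a pair (M0, [M1,...,Mk]) standing for
  M0 + x_0 M1 + ... + x_(k-1) Mk, all of the same size m x n.
  Two such representations denote the same polynomial matrix iff they are equal
  (padding with zero coefficient matrices aside).\<close>

type_synonym 'a aci = "'a mat \<times> 'a mat list"

definition aci_rows :: "'a aci \<Rightarrow> nat" where
  "aci_rows M = dim_row (fst M)"

definition aci_cols :: "'a aci \<Rightarrow> nat" where
  "aci_cols M = dim_col (fst M)"

text \<open>Well-formedness: all coefficient matrices have the same size, and each indeterminate
  appears in at most one column (its coefficient matrix is supported on a single column).\<close>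
definition is_aci :: "'a::zero aci \<Rightarrow> bool" where
  "is_aci M \<longleftrightarrow>
     (\<forall>B \<in> set (snd M). B \<in> carrier_mat (aci_rows M) (aci_cols M) \<and>
        (\<exists>j. \<forall>i < aci_rows M. \<forall>j' < aci_cols M. j' \<noteq> j \<longrightarrow> B $$ (i, j') = 0))"

definition aci_eval :: "'a::comm_ring_1 aci \<Rightarrow> (nat \<Rightarrow> 'a) \<Rightarrow> 'a mat" where
  "aci_eval M a = mat (aci_rows M) (aci_cols M)
     (\<lambda>(i, j). fst M $$ (i, j) + (\<Sum>v < length (snd M). a v * (snd M ! v) $$ (i, j)))"

definition mrank :: "'a::field mat \<Rightarrow> nat" where
  "mrank A = vec_space.rank (dim_row A) A"

definition maxRank :: "'a::field aci \<Rightarrow> nat" where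
  "maxRank M = Max (range (\<lambda>a. mrank (aci_eval M a)))"

definition FRmR :: "'a::field aci \<Rightarrow> bool" where
  "FRmR M \<longleftrightarrow> maxRank M = aci_rows M \<or> aci_cols M = 0"

definition FCmR :: "'a::field aci \<Rightarrow> bool" where
  "FCmR M \<longleftrightarrow> maxRank M = aci_cols M \<or> aci_rows M = 0"

definition aci_lmult :: "'a::semiring_0 mat \<Rightarrow> 'a aci \<Rightarrow> 'a aci" where
  "aci_lmult R M = (R * fst M, map (\<lambda>B. R * B) (snd M))"

definition aci_rmult :: "'a::semiring_0 aci \<Rightarrow> 'a mat \<Rightarrow> 'a aci" where
  "aci_rmult M Q = (fst M * Q, map (\<lambda>B. B * Q) (snd M))"

definition aci_block :: "'a aci \<Rightarrow> nat \<Rightarrow> nat \<Rightarrow> nat \<Rightarrow> nat \<Rightarrow> 'a aci" where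
  "aci_block M r0 r1 c0 c1 =
     (let blk = (\<lambda>B. mat (r1 - r0) (c1 - c0) (\<lambda>(i, j). B $$ (i + r0, j + c0)))
      in (blk (fst M), map blk (snd M)))"

text \<open>Permutation matrix Q_F (columns indexed 0..<n): M * Q_F has as columns
  f_1,...,f_s, g_1,...,g_(n-s) of M, in that order.\<close>
definition col_order :: "nat \<Rightarrow> nat set \<Rightarrow> nat list" where
  "col_order n F = sorted_list_of_set F @ sorted_list_of_set ({0..<n} - F)"

definition Qperm :: "nat \<Rightarrow> nat set \<Rightarrow> 'a::zero_neq_one mat" where
  "Qperm n F = mat n n (\<lambda>(i, j). if i = col_order n F ! j then 1 else 0)"

definition semifactor_set :: "'a::field aci \<Rightarrow> nat set \<Rightarrow> bool" where
  "semifactor_set M F \<longleftrightarrow>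
     (let m = aci_rows M; n = aci_cols M; s = card F in
      F \<subseteq> {0..<n} \<and>
      (\<exists>R r. R \<in> carrier_mat m m \<and> invertible_mat R \<and> r \<le> m \<and> r + s = max m n \<and>
         (let N = aci_rmult (aci_lmult R M) (Qperm n F) in
           (\<forall>i j. m - r \<le> i \<and> i < m \<and> j < s \<longrightarrow>
              fst N $$ (i, j) = 0 \<and> (\<forall>B \<in> set (snd N). B $$ (i, j) = 0)) \<and>
           FRmR (aci_block N 0 (m - r) 0 s) \<and>
           FCmR (aci_block N (m - r) m s n))))"

end

theory Submission
  imports Defs
begin

definition colfull :: "'a::field mat \<Rightarrow> bool" where
  "colfull A \<longleftrightarrow> (\<forall>v\<in>carrier_vec (dim_col A). A *\<^sub>v v = 0\<^sub>v (dim_row A) \<longrightarrow> v = 0\<^sub>v (dim_col A))"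

context vec_space begin
lemma rank_le_card_set_cols:
  assumes "A \<in> carrier_mat n nc"
  shows "rank A \<le> card (set (cols A))"
proof -
  obtain S where S: "maximal S (\<lambda>T. T \<subseteq> set (cols A) \<and> lin_indpt T)"
    using maximal_exists[of "(\<lambda>T. T \<subseteq> set (cols A) \<and> lin_indpt T)" "card (set (cols A))" "{}"]
    by (meson List.finite_set card_mono empty_iff empty_subsetI finite_lin_indpt2 rev_finite_subset)
  then have "card S \<le> card (set (cols A))" by (simp add: card_mono maximal_def)
  then show ?thesis using rank_card_indpt[OF assms S] by simp
qed

lemma rank_colfull:
  assumes A: "A \<in> carrier_mat n nc"
  shows "rank A = nc \<longleftrightarrow> colfull A"
proof
  assume r: "rank A = nc"
  have dist: "distinct (cols A)"
  proof (rule ccontr)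
    assume "\<not> distinct (cols A)"
    then have "card (set (cols A)) < length (cols A)"
      using card_distinct card_length nat_less_le by blast
    then show False using rank_le_card_set_cols[OF A] r A by auto
  qed
  have li: "lin_indpt (set (cols A))"
    using full_rank_lin_indpt[OF A r dist] .
  show "colfull A" unfolding colfull_def
  proof (intro ballI impI)
    fix v assume v: "v \<in> carrier_vec (dim_col A)" and Av: "A *\<^sub>v v = 0\<^sub>v (dim_row A)"
    show "v = 0\<^sub>v (dim_col A)"
    proof (rule ccontr)
      assume "v \<noteq> 0\<^sub>v (dim_col A)"
      then have "lin_dep (set (cols A))"
        using lin_depI[OF A _ _ _ dist, of v] v Av A by auto
      then show False using li by auto
    qed
  qed
next
  assume c: "colfull A"
  have dist: "distinct (cols A)"
  proof (rule ccontr)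
    assume "\<not> distinct (cols A)"
    then obtain i j where ij: "i < nc" "j < nc" "i \<noteq> j" "cols A ! i = cols A ! j"
      using A by (auto simp: distinct_conv_nth)
    define v :: "'a vec" where "v = unit_vec nc i - unit_vec nc j"
    have v: "v \<in> carrier_vec nc" unfolding v_def by auto
    have "v $ i = 1" using ij unfolding v_def by auto
    then have vnz: "v \<noteq> 0\<^sub>v nc" using ij by auto
    have "A *\<^sub>v v = A *\<^sub>v unit_vec nc i - A *\<^sub>v unit_vec nc j"
      unfolding v_def using A by (simp add: mult_minus_distrib_mat_vec)
    also have "\<dots> = col A i - col A j"
    proof -
      have "A *\<^sub>v unit_vec nc k = col A k" if "k < nc" for k
        using that A by (intro eq_vecI) auto
      then show ?thesis using ij by simp
    qed
    also have "\<dots> = col A j - col A j" using ij A by (metis cols_nth carrier_matD(2))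
    also have "\<dots> = 0\<^sub>v n" using ij A by (intro eq_vecI) auto
    finally show False using c vnz v A unfolding colfull_def by auto
  qed
  have li: "lin_indpt (set (cols A))"
  proof
    assume "lin_dep (set (cols A))"
    then obtain v where "v \<in> carrier_vec nc" "v \<noteq> 0\<^sub>v nc" "A *\<^sub>v v = 0\<^sub>v n"
      using lin_depE[OF A _ dist] by blast
    then show False using c A unfolding colfull_def by auto
  qed
  show "rank A = nc" using lin_indpt_full_rank[OF A dist li] .
qed

end

lemma mult_index_sum:
  assumes "A \<in> carrier_mat m k" "B \<in> carrier_mat k n" "i < m" "j < n"
  shows "(A * B) $$ (i,j) = (\<Sum>l\<in>{0..<k}. A $$ (i,l) * B $$ (l,j))"
  using assms by (simp add: scalar_prod_def)

lemma mult_vec_sum: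
  assumes "A \<in> carrier_mat m k" "v \<in> carrier_vec k" "i < m"
  shows "(A *\<^sub>v v) $ i = (\<Sum>l\<in>{0..<k}. A $$ (i,l) * v $ l)"
  using assms by (simp add: scalar_prod_def)

context fixes n :: nat and F :: "nat set" assumes FS: "F \<subseteq> {0..<n}"
begin

lemma fin_F: "finite F" using FS finite_subset by blast

lemma co_len: "length (col_order n F) = n"
proof -
  have "card F + card ({0..<n} - F) = n"
    using FS fin_F card_mono[OF _ FS] by (simp add: card_Diff_subset)
  then show ?thesis unfolding col_order_def by simp
qed

lemma co_distinct: "distinct (col_order n F)"
  unfolding col_order_def using fin_F by auto

lemma co_set: "set (col_order n F) = {0..<n}"
  unfolding col_order_def using fin_F FS by auto

lemma co_lt: "j < n \<Longrightarrow> col_order n F ! j < n"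
  using co_set co_len nth_mem by fastforce

lemma co_in: "j < card F \<Longrightarrow> col_order n F ! j \<in> F"
  unfolding col_order_def using fin_F
  by (simp add: nth_append) (metis length_sorted_list_of_set nth_mem set_sorted_list_of_set)

lemma co_notin: "card F \<le> j \<Longrightarrow> j < n \<Longrightarrow> col_order n F ! j \<notin> F"
proof -
  assume a: "card F \<le> j" "j < n"
  let ?L = "sorted_list_of_set ({0..<n} - F)"
  have "col_order n F ! j = ?L ! (j - card F)"
    unfolding col_order_def using fin_F a by (simp add: nth_append)
  moreover have "j - card F < length ?L" using co_len a unfolding col_order_def by simp
  ultimately have "col_order n F ! j \<in> set ?L" by (metis nth_mem)
  then show ?thesis using set_sorted_list_of_set[of "{0..<n} - F"] by blast
qed

lemma co_surj: "f \<in> F \<Longrightarrow> \<exists>j < card F. col_order n F ! j = f"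
proof -
  assume "f \<in> F"
  then have "f \<in> set (sorted_list_of_set F)" using fin_F by simp
  then obtain j where "j < length (sorted_list_of_set F)" "sorted_list_of_set F ! j = f"
    by (metis in_set_conv_nth)
  then show ?thesis unfolding col_order_def by (auto simp: nth_append)
qed

lemma Q_carrier: "(Qperm n F :: 'a::zero_neq_one mat) \<in> carrier_mat n n"
  unfolding Qperm_def by auto

lemma Q_index: "i < n \<Longrightarrow> j < n \<Longrightarrow> (Qperm n F :: 'a::zero_neq_one mat) $$ (i,j) = (if i = col_order n F ! j then 1 else 0)"
  unfolding Qperm_def by auto

lemma co_index_eq: "j < n \<Longrightarrow> j' < n \<Longrightarrow> (col_order n F ! j = col_order n F ! j') = (j = j')"
  using co_distinct co_len nth_eq_iff_index_eq by metis

lemma mult_Q_index: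
  assumes B: "(B :: 'a::semiring_1 mat) \<in> carrier_mat m n" and i: "i < m" and j: "j < n"
  shows "(B * Qperm n F) $$ (i,j) = B $$ (i, col_order n F ! j)"
proof -
  let ?c = "col_order n F ! j"
  have c: "?c < n" using co_lt j .
  have "(B * Qperm n F) $$ (i,j) = (\<Sum>k\<in>{0..<n}. B $$ (i,k) * (if k = ?c then 1 else 0))"
    using B i j Q_carrier by (simp add: mult_index_sum[OF B Q_carrier i j] Q_index)
  also have "\<dots> = B $$ (i, ?c)"
    using c by (simp add: if_distrib cong: if_cong)
  finally show ?thesis .
qed

lemma QQt: "(Qperm n F :: 'a::semiring_1 mat) * transpose_mat (Qperm n F) = 1\<^sub>m n"
proof (rule eq_matI)
  fix i j assume ij: "i < dim_row (1\<^sub>m n :: 'a mat)" "j < dim_col (1\<^sub>m n :: 'a mat)"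
  then have ij: "i < n" "j < n" by auto
  have tr: "transpose_mat (Qperm n F :: 'a mat) \<in> carrier_mat n n" using Q_carrier by auto
  have "(transpose_mat (Qperm n F) * Qperm n F :: 'a mat) $$ (i,j) = 0" if "False" using that by simp
  obtain k0 where k0: "k0 < n" "col_order n F ! k0 = i" using co_set co_len ij
    by (metis atLeastLessThan_iff in_set_conv_nth zero_le)
  have "(Qperm n F * transpose_mat (Qperm n F) :: 'a mat) $$ (i,j) 
      = (\<Sum>k\<in>{0..<n}. (if i = col_order n F ! k then 1 else 0) * (if j = col_order n F ! k then 1 else 0))"
    using ij Q_carrier tr by (simp add: mult_index_sum[OF Q_carrier tr ij] Q_index)
  also have "\<dots> = (\<Sum>k\<in>{0..<n}. if k = k0 then (if i = j then 1 else 0) else 0)"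
  proof (rule sum.cong[OF refl])
    fix k assume k: "k \<in> {0..<n}"
    have "(i = col_order n F ! k) = (k = k0)"
      using k k0 co_index_eq by auto
    then show "(if i = col_order n F ! k then 1 else 0) * (if j = col_order n F ! k then 1 else 0)
       = (if k = k0 then (if i = j then 1 else 0) else (0::'a))"
      by auto
  qed
  also have "\<dots> = (if i = j then 1 else 0)"
    using k0 by simp
  finally show "(Qperm n F * transpose_mat (Qperm n F)) $$ (i, j) = (1\<^sub>m n :: 'a mat) $$ (i, j)"
    using ij by simp
qed (use Q_carrier in auto)

lemma QtQ: "transpose_mat (Qperm n F :: 'a::semiring_1 mat) * Qperm n F = 1\<^sub>m n"
proof (rule eq_matI)
  fix i j assume ij: "i < dim_row (1\<^sub>m n :: 'a mat)" "j < dim_col (1\<^sub>m n :: 'a mat)"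
  then have ij: "i < n" "j < n" by auto
  have tr: "transpose_mat (Qperm n F :: 'a mat) \<in> carrier_mat n n" using Q_carrier by auto
  have "(transpose_mat (Qperm n F) * Qperm n F :: 'a mat) $$ (i,j) 
      = (\<Sum>k\<in>{0..<n}. (if k = col_order n F ! i then 1 else 0) * (if k = col_order n F ! j then 1 else 0))"
    using ij Q_carrier tr by (simp add: mult_index_sum[OF tr Q_carrier ij] Q_index)
  also have "\<dots> = (\<Sum>k\<in>{0..<n}. if k = col_order n F ! i then (if i = j then 1 else 0) else 0)"
    using co_index_eq ij by (intro sum.cong) auto
  also have "\<dots> = (if i = j then 1 else 0)"
    using co_lt ij by simp
  finally show "(transpose_mat (Qperm n F) * Qperm n F) $$ (i, j) = (1\<^sub>m n :: 'a mat) $$ (i, j)"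
    using ij by simp
qed (use Q_carrier in auto)

lemma Qt_vec: assumes y: "(y :: 'a::semiring_1 vec) \<in> carrier_vec n" and i: "i < n"
  shows "(transpose_mat (Qperm n F) *\<^sub>v y) $ i = y $ (col_order n F ! i)"
proof -
  have "(transpose_mat (Qperm n F) *\<^sub>v y) $ i = (\<Sum>k\<in>{0..<n}. (if k = col_order n F ! i then 1 else 0) * y $ k)"
    using i y Q_carrier by (subst mult_vec_sum[of _ n n]) (auto intro!: sum.cong simp: Q_index)
  also have "\<dots> = (\<Sum>k\<in>{0..<n}. if k = col_order n F ! i then y $ k else 0)"
    by (intro sum.cong) auto
  also have "\<dots> = y $ (col_order n F ! i)" using co_lt i by simp
  finally show ?thesis .
qed

lemma Q_vec: assumes z: "(z :: 'a::semiring_1 vec) \<in> carrier_vec n" and i: "i < n"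
  shows "(Qperm n F *\<^sub>v z) $ i = (\<Sum>j\<in>{0..<n}. if i = col_order n F ! j then z $ j else 0)"
  using i z Q_carrier by (subst mult_vec_sum[of _ n n]) (auto intro!: sum.cong simp: Q_index)

end

lemma eval_carrier: "aci_eval M a \<in> carrier_mat (aci_rows M) (aci_cols M)"
  unfolding aci_eval_def by auto

lemma eval_dims[simp]: "dim_row (aci_eval M a) = aci_rows M" "dim_col (aci_eval M a) = aci_cols M"
  unfolding aci_eval_def by auto

lemma eval_index: "i < aci_rows M \<Longrightarrow> j < aci_cols M \<Longrightarrow>
  aci_eval M a $$ (i,j) = fst M $$ (i,j) + (\<Sum>v<length (snd M). a v * (snd M ! v) $$ (i,j))"
  unfolding aci_eval_def by auto

lemma lmult_dims[simp]: "aci_rows (aci_lmult R M) = dim_row R" "aci_cols (aci_lmult R M) = aci_cols M"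
  "length (snd (aci_lmult R M)) = length (snd M)"
  unfolding aci_lmult_def aci_rows_def aci_cols_def by auto

lemma rmult_dims[simp]: "aci_rows (aci_rmult M Q) = aci_rows M" "aci_cols (aci_rmult M Q) = dim_col Q"
  "length (snd (aci_rmult M Q)) = length (snd M)"
  unfolding aci_rmult_def aci_rows_def aci_cols_def by auto

lemma fst_carrier: "fst M \<in> carrier_mat (aci_rows M) (aci_cols M)"
  unfolding aci_rows_def aci_cols_def by auto

lemma eval_lmult:
  fixes M :: "'a::field aci"
  assumes R: "R \<in> carrier_mat m m" and m: "aci_rows M = m"
    and Bs: "\<forall>B\<in>set (snd M). B \<in> carrier_mat m (aci_cols M)"
  shows "aci_eval (aci_lmult R M) a = R * aci_eval M a"
proof (rule eq_matI)
  let ?n = "aci_cols M"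
  have M0: "fst M \<in> carrier_mat m ?n" using fst_carrier m by metis
  have E: "aci_eval M a \<in> carrier_mat m ?n" using eval_carrier m by metis
  fix i j assume "i < dim_row (R * aci_eval M a)" "j < dim_col (R * aci_eval M a)"
  then have ij: "i < m" "j < ?n" using R E by auto
  have Bv: "snd M ! v \<in> carrier_mat m ?n" if "v < length (snd M)" for v using Bs that by auto
  have "aci_eval (aci_lmult R M) a $$ (i,j) = (R * fst M) $$ (i,j) + (\<Sum>v<length (snd M). a v * (R * snd M ! v) $$ (i,j))"
    using ij R m by (subst eval_index) (auto simp: aci_lmult_def aci_rows_def aci_cols_def)
  also have "\<dots> = (\<Sum>k\<in>{0..<m}. R $$ (i,k) * fst M $$ (k,j)) + (\<Sum>v<length (snd M). a v * (\<Sum>k\<in>{0..<m}. R $$ (i,k) * (snd M ! v) $$ (k,j)))"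
  proof -
    have "(R * snd M ! v) $$ (i,j) = (\<Sum>k\<in>{0..<m}. R $$ (i,k) * (snd M ! v) $$ (k,j))"
      if "v \<in> {..<length (snd M)}" for v using that ij R Bv by (intro mult_index_sum) auto
    then show ?thesis using mult_index_sum[OF R M0 ij] by simp
  qed
  also have "\<dots> = (\<Sum>k\<in>{0..<m}. R $$ (i,k) * (fst M $$ (k,j) + (\<Sum>v<length (snd M). a v * (snd M ! v) $$ (k,j))))"
    by (simp add: sum_distrib_left distrib_left sum.distrib sum.swap[of _ "{0..<m}"] algebra_simps)
  also have "\<dots> = (\<Sum>k\<in>{0..<m}. R $$ (i,k) * aci_eval M a $$ (k,j))"
    using ij m by (intro sum.cong) (auto simp: eval_index)
  also have "\<dots> = (R * aci_eval M a) $$ (i,j)" using mult_index_sum[OF R E ij] by simp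
  finally show "aci_eval (aci_lmult R M) a $$ (i,j) = (R * aci_eval M a) $$ (i,j)" .
qed (use R m in \<open>auto simp: aci_eval_def\<close>)

lemma eval_rmult:
  fixes M :: "'a::field aci"
  assumes Q: "Q \<in> carrier_mat n n" and n: "aci_cols M = n"
    and Bs: "\<forall>B\<in>set (snd M). B \<in> carrier_mat (aci_rows M) n"
  shows "aci_eval (aci_rmult M Q) a = aci_eval M a * Q"
proof (rule eq_matI)
  let ?m = "aci_rows M"
  have M0: "fst M \<in> carrier_mat ?m n" using fst_carrier n by metis
  have E: "aci_eval M a \<in> carrier_mat ?m n" using eval_carrier n by metis
  fix i j assume "i < dim_row (aci_eval M a * Q)" "j < dim_col (aci_eval M a * Q)"
  then have ij: "i < ?m" "j < n" using Q E by auto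
  have Bv: "snd M ! v \<in> carrier_mat ?m n" if "v < length (snd M)" for v using Bs that by auto
  have "aci_eval (aci_rmult M Q) a $$ (i,j) = (fst M * Q) $$ (i,j) + (\<Sum>v<length (snd M). a v * (snd M ! v * Q) $$ (i,j))"
    using ij Q n by (subst eval_index) (auto simp: aci_rmult_def aci_rows_def aci_cols_def)
  also have "\<dots> = (\<Sum>k\<in>{0..<n}. fst M $$ (i,k) * Q $$ (k,j)) + (\<Sum>v<length (snd M). a v * (\<Sum>k\<in>{0..<n}. (snd M ! v) $$ (i,k) * Q $$ (k,j)))"
  proof -
    have "(snd M ! v * Q) $$ (i,j) = (\<Sum>k\<in>{0..<n}. (snd M ! v) $$ (i,k) * Q $$ (k,j))"
      if "v \<in> {..<length (snd M)}" for v using that ij Q Bv by (intro mult_index_sum) auto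
    then show ?thesis using mult_index_sum[OF M0 Q ij] by simp
  qed
  also have "\<dots> = (\<Sum>k\<in>{0..<n}. (fst M $$ (i,k) + (\<Sum>v<length (snd M). a v * (snd M ! v) $$ (i,k))) * Q $$ (k,j))"
    by (simp add: sum_distrib_left sum_distrib_right distrib_right sum.distrib sum.swap[of _ "{0..<n}"] algebra_simps)
  also have "\<dots> = (\<Sum>k\<in>{0..<n}. aci_eval M a $$ (i,k) * Q $$ (k,j))"
    using ij n by (intro sum.cong) (auto simp: eval_index)
  also have "\<dots> = (aci_eval M a * Q) $$ (i,j)" using mult_index_sum[OF E Q ij] by simp
  finally show "aci_eval (aci_rmult M Q) a $$ (i,j) = (aci_eval M a * Q) $$ (i,j)" .
qed (use Q n in \<open>auto simp: aci_eval_def\<close>)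

lemma block_dims[simp]: "aci_rows (aci_block N r0 r1 c0 c1) = r1 - r0" "aci_cols (aci_block N r0 r1 c0 c1) = c1 - c0"
  unfolding aci_block_def aci_rows_def aci_cols_def Let_def by auto

lemma eval_block:
  assumes "i < r1 - r0" "j < c1 - c0" "r1 \<le> aci_rows N" "c1 \<le> aci_cols N"
  shows "aci_eval (aci_block N r0 r1 c0 c1) a $$ (i,j) = aci_eval N a $$ (i + r0, j + c0)"
proof -
  have "aci_eval (aci_block N r0 r1 c0 c1) a $$ (i,j) = fst (aci_block N r0 r1 c0 c1) $$ (i,j) +
    (\<Sum>v<length (snd (aci_block N r0 r1 c0 c1)). a v * (snd (aci_block N r0 r1 c0 c1) ! v) $$ (i,j))"
    using assms by (intro eval_index) auto
  also have "\<dots> = aci_eval N a $$ (i + r0, j + c0)"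
    using assms by (subst eval_index) (auto simp: aci_block_def Let_def)
  finally show ?thesis .
qed


lemma mrank_le: "mrank (aci_eval N a) \<le> aci_cols N"
  unfolding mrank_def using vec_space.rank_le_nc[OF eval_carrier] by simp

lemma maxRank_colfull:
  fixes N :: "'a::field aci"
  shows "maxRank N = aci_cols N \<longleftrightarrow> (\<exists>a. colfull (aci_eval N a))"
proof -
  let ?S = "range (\<lambda>a. mrank (aci_eval N a))"
  have "?S \<subseteq> {..aci_cols N}" using mrank_le[of N] by blast
  then have fin: "finite ?S" using finite_subset by blast
  have ne: "?S \<noteq> {}" by auto
  have le: "maxRank N \<le> aci_cols N" unfolding maxRank_def using fin ne mrank_le[of N] by (simp add: Max_le_iff)
  have rc: "mrank (aci_eval N a) = aci_cols N \<longleftrightarrow> colfull (aci_eval N a)" for a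
    unfolding mrank_def using vec_space.rank_colfull[OF eval_carrier] by simp
  show ?thesis
  proof
    assume "maxRank N = aci_cols N"
    moreover have "maxRank N \<in> ?S" unfolding maxRank_def using Max_in[OF fin ne] .
    ultimately show "\<exists>a. colfull (aci_eval N a)" using rc by (metis imageE)
  next
    assume "\<exists>a. colfull (aci_eval N a)"
    then obtain a where "mrank (aci_eval N a) = aci_cols N" using rc by auto
    then have "aci_cols N \<le> maxRank N" unfolding maxRank_def using fin by (metis Max_ge rangeI)
    then show "maxRank N = aci_cols N" using le by auto
  qed
qed

lemma colfull_0: "dim_col A = 0 \<Longrightarrow> colfull A"
  unfolding colfull_def by (auto intro!: eq_vecI)

lemma FRmR_iff: "aci_rows N = aci_cols N \<Longrightarrow> FRmR N \<longleftrightarrow> (\<exists>a. colfull (aci_eval N a))"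
proof -
  assume a: "aci_rows N = aci_cols N"
  have "aci_cols N = 0 \<Longrightarrow> colfull (aci_eval N x)" for x using colfull_0[of "aci_eval N x"] by simp
  then show ?thesis unfolding FRmR_def using maxRank_colfull[of N] a by auto
qed

lemma FCmR_iff: "aci_cols N \<le> aci_rows N \<Longrightarrow> FCmR N \<longleftrightarrow> (\<exists>a. colfull (aci_eval N a))"
proof -
  assume a: "aci_cols N \<le> aci_rows N"
  have "aci_cols N = 0 \<Longrightarrow> colfull (aci_eval N x)" for x using colfull_0[of "aci_eval N x"] by simp
  then show ?thesis unfolding FCmR_def using maxRank_colfull[of N] a by auto
qed


lemma mult_zero_vec[simp]: "A \<in> carrier_mat m n \<Longrightarrow> A *\<^sub>v 0\<^sub>v n = 0\<^sub>v m"
  by (intro eq_vecI) (auto simp: scalar_prod_def)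

lemma invertible_inv:
  assumes R: "(R :: 'a::field mat) \<in> carrier_mat m m" and inv: "invertible_mat R"
  shows "\<exists>S \<in> carrier_mat m m. S * R = 1\<^sub>m m \<and> R * S = 1\<^sub>m m"
proof -
  from inv obtain S where "R * S = 1\<^sub>m (dim_row R)" "S * R = 1\<^sub>m (dim_row S)"
    unfolding invertible_mat_def inverts_mat_def by auto
  moreover then have "S \<in> carrier_mat m m" using R
    by (metis carrier_matD carrier_matI index_mult_mat(2,3) index_one_mat(2,3))
  ultimately show ?thesis using R by auto
qed

lemma colfull_left:
  assumes R: "(R :: 'a::field mat) \<in> carrier_mat m m" and S: "S \<in> carrier_mat m m" and SR: "S * R = 1\<^sub>m m"
    and A: "A \<in> carrier_mat m n"
  shows "colfull (R * A) \<longleftrightarrow> colfull A"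
proof
  assume c: "colfull (R * A)"
  show "colfull A" unfolding colfull_def
  proof (intro ballI impI)
    fix v assume v: "v \<in> carrier_vec (dim_col A)" and Av: "A *\<^sub>v v = 0\<^sub>v (dim_row A)"
    have "(R * A) *\<^sub>v v = R *\<^sub>v (A *\<^sub>v v)" using R A v by (simp add: assoc_mult_mat_vec)
    also have "\<dots> = 0\<^sub>v m" using Av R A by simp
    finally show "v = 0\<^sub>v (dim_col A)" using c v R A unfolding colfull_def by auto
  qed
next
  assume c: "colfull A"
  show "colfull (R * A)" unfolding colfull_def
  proof (intro ballI impI)
    fix v assume v: "v \<in> carrier_vec (dim_col (R * A))" and Av: "(R * A) *\<^sub>v v = 0\<^sub>v (dim_row (R * A))"
    have "A *\<^sub>v v = (S * R) *\<^sub>v (A *\<^sub>v v)" using SR A v by simp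
    also have "\<dots> = S *\<^sub>v ((R * A) *\<^sub>v v)" using S R A v by (simp add: assoc_mult_mat_vec)
    also have "\<dots> = 0\<^sub>v m" using Av S R by simp
    finally show "v = 0\<^sub>v (dim_col (R * A))" using c v R A unfolding colfull_def by auto
  qed
qed

lemma colfull_right:
  assumes Q: "(Q :: 'a::field mat) \<in> carrier_mat n n" and Q': "Q' \<in> carrier_mat n n"
    and QQ': "Q * Q' = 1\<^sub>m n" and Q'Q: "Q' * Q = 1\<^sub>m n"
    and A: "A \<in> carrier_mat m n"
  shows "colfull (A * Q) \<longleftrightarrow> colfull A"
proof
  assume c: "colfull (A * Q)"
  show "colfull A" unfolding colfull_def
  proof (intro ballI impI)
    fix v assume v: "v \<in> carrier_vec (dim_col A)" and Av: "A *\<^sub>v v = 0\<^sub>v (dim_row A)"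
    have "(A * Q) *\<^sub>v (Q' *\<^sub>v v) = A *\<^sub>v ((Q * Q') *\<^sub>v v)" using Q Q' A v by (simp add: assoc_mult_mat_vec)
    also have "\<dots> = 0\<^sub>v m" using Av QQ' A v by simp
    finally have "Q' *\<^sub>v v = 0\<^sub>v n" using c v Q' A Q unfolding colfull_def by auto
    then have "Q *\<^sub>v (Q' *\<^sub>v v) = 0\<^sub>v n" using Q by simp
    then show "v = 0\<^sub>v (dim_col A)" using Q Q' QQ' v A by (simp add: assoc_mult_mat_vec[symmetric])
  qed
next
  assume c: "colfull A"
  show "colfull (A * Q)" unfolding colfull_def
  proof (intro ballI impI)
    fix v assume v: "v \<in> carrier_vec (dim_col (A * Q))" and Av: "(A * Q) *\<^sub>v v = 0\<^sub>v (dim_row (A * Q))"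
    have "A *\<^sub>v (Q *\<^sub>v v) = 0\<^sub>v m" using Av A Q v by (simp add: assoc_mult_mat_vec)
    then have "Q *\<^sub>v v = 0\<^sub>v n" using c v A Q unfolding colfull_def by auto
    then have "Q' *\<^sub>v (Q *\<^sub>v v) = 0\<^sub>v n" using Q' by simp
    then show "v = 0\<^sub>v (dim_col (A * Q))" using Q Q' Q'Q v A by (simp add: assoc_mult_mat_vec[symmetric])
  qed
qed


lemma colfull_surj:
  assumes A: "(A :: 'a::field mat) \<in> carrier_mat s s" and c: "colfull A" and u: "u \<in> carrier_vec s"
  shows "\<exists>z \<in> carrier_vec s. A *\<^sub>v z = u"
proof -
  have "det A \<noteq> 0" using det_0_iff_vec_prod_zero_field[OF A] c A unfolding colfull_def by auto
  from det_non_zero_imp_unit[OF A this, of "()"]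
  obtain B where B: "B \<in> carrier_mat s s" "A * B = 1\<^sub>m s"
    unfolding Units_def ring_mat_def by auto
  have "A *\<^sub>v (B *\<^sub>v u) = u" using A B u by (simp add: assoc_mult_mat_vec[symmetric])
  then show ?thesis using B u by (intro bexI[of _ "B *\<^sub>v u"]) auto
qed

context
  fixes X :: "'a::field mat" and m n s :: nat
  assumes X: "X \<in> carrier_mat m n" and sn: "s \<le> n" and nm: "n \<le> m"
    and Z: "\<And>i j. s \<le> i \<Longrightarrow> i < m \<Longrightarrow> j < s \<Longrightarrow> X $$ (i,j) = 0"
begin

definition "TL = mat s s (\<lambda>(i,j). X $$ (i,j))"
definition "BR = mat (m - s) (n - s) (\<lambda>(i,j). X $$ (i + s, j + s))"

lemma Xv_sum: "v \<in> carrier_vec n \<Longrightarrow> i < m \<Longrightarrow>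
   (X *\<^sub>v v) $ i = (\<Sum>j\<in>{0..<s}. X $$ (i,j) * v $ j) + (\<Sum>j\<in>{s..<n}. X $$ (i,j) * v $ j)"
proof -
  assume v: "v \<in> carrier_vec n" and i: "i < m"
  have "(X *\<^sub>v v) $ i = (\<Sum>j\<in>{0..<n}. X $$ (i,j) * v $ j)" by (rule mult_vec_sum[OF X v i])
  then show ?thesis using sum.atLeastLessThan_concat[of 0 s n "\<lambda>j. X $$ (i,j) * v $ j"] sn by simp
qed

lemma colfull_blocks:
  assumes cA: "colfull TL" and cC: "colfull BR"
  shows "colfull X"
  unfolding colfull_def
proof (intro ballI impI)
  fix v assume v: "v \<in> carrier_vec (dim_col X)" and Xv: "X *\<^sub>v v = 0\<^sub>v (dim_row X)"
  then have v: "v \<in> carrier_vec n" and Xv: "X *\<^sub>v v = 0\<^sub>v m" using X by auto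
  define v2 where "v2 = vec (n - s) (\<lambda>j. v $ (j + s))"
  have "BR *\<^sub>v v2 = 0\<^sub>v (m - s)"
  proof (rule eq_vecI)
    fix i assume "i < dim_vec (0\<^sub>v (m - s) :: 'a vec)"
    then have i: "i < m - s" by simp
    have "(BR *\<^sub>v v2) $ i = (\<Sum>j\<in>{0..<n-s}. X $$ (i + s, j + s) * v $ (j + s))"
      using i by (subst mult_vec_sum[of _ "m-s" "n-s"]) (auto simp: BR_def v2_def)
    also have "\<dots> = (\<Sum>j\<in>{s..<n}. X $$ (i + s, j) * v $ j)"
      using sum.shift_bounds_nat_ivl[of "\<lambda>j. X $$ (i + s, j) * v $ j" 0 s "n - s"] sn by simp
    also have "\<dots> = (X *\<^sub>v v) $ (i + s)"
      using Xv_sum[OF v, of "i + s"] i Z by simp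
    also have "\<dots> = 0" using Xv i by simp
    finally show "(BR *\<^sub>v v2) $ i = 0\<^sub>v (m - s) $ i" using i by simp
  qed (simp add: BR_def)
  then have v20: "v2 = 0\<^sub>v (n - s)" using cC unfolding colfull_def by (auto simp: BR_def v2_def)
  have v2z: "v $ j = 0" if "s \<le> j" "j < n" for j
    using that arg_cong[OF v20, of "\<lambda>w. w $ (j - s)"] by (simp add: v2_def, metis le_add_diff_inverse2)
  define v1 where "v1 = vec s (\<lambda>j. v $ j)"
  have "TL *\<^sub>v v1 = 0\<^sub>v s"
  proof (rule eq_vecI)
    fix i assume "i < dim_vec (0\<^sub>v s :: 'a vec)"
    then have i: "i < s" by simp
    have "(TL *\<^sub>v v1) $ i = (\<Sum>j\<in>{0..<s}. X $$ (i, j) * v $ j)"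
      using i by (subst mult_vec_sum[of _ s s]) (auto simp: TL_def v1_def)
    also have "\<dots> = (X *\<^sub>v v) $ i"
      using Xv_sum[OF v, of i] i sn nm v2z by simp
    also have "\<dots> = 0" using Xv i sn nm by simp
    finally show "(TL *\<^sub>v v1) $ i = 0\<^sub>v s $ i" using i by simp
  qed (simp add: TL_def)
  then have v10: "v1 = 0\<^sub>v s" using cA unfolding colfull_def by (auto simp: TL_def v1_def)
  have v1z: "v $ j = 0" if "j < s" for j
    using that arg_cong[OF v10, of "\<lambda>w. w $ j"] by (simp add: v1_def)
  show "v = 0\<^sub>v (dim_col X)" using v X v1z v2z by (intro eq_vecI) (auto, meson not_le)
qed

lemma colfull_TL:
  assumes c: "colfull X"
  shows "colfull TL"
  unfolding colfull_def
proof (intro ballI impI)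
  fix v1 assume v1: "v1 \<in> carrier_vec (dim_col TL)" and Av: "TL *\<^sub>v v1 = 0\<^sub>v (dim_row TL)"
  then have v1: "v1 \<in> carrier_vec s" and Av: "TL *\<^sub>v v1 = 0\<^sub>v s" by (auto simp: TL_def)
  define v where "v = vec n (\<lambda>j. if j < s then v1 $ j else 0)"
  have v: "v \<in> carrier_vec n" by (simp add: v_def)
  have "X *\<^sub>v v = 0\<^sub>v m"
  proof (rule eq_vecI)
    fix i assume "i < dim_vec (0\<^sub>v m :: 'a vec)"
    then have i: "i < m" by simp
    have "(X *\<^sub>v v) $ i = (\<Sum>j\<in>{0..<s}. X $$ (i,j) * v1 $ j)"
      using Xv_sum[OF v i] sn by (simp add: v_def)
    also have "\<dots> = 0"
    proof (cases "i < s")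
      case True
      have "(TL *\<^sub>v v1) $ i = (\<Sum>j\<in>{0..<s}. X $$ (i,j) * v1 $ j)"
        using True v1 by (subst mult_vec_sum[of _ s s]) (auto simp: TL_def)
      then show ?thesis using Av True by simp
    next
      case False
      then show ?thesis using Z i by simp
    qed
    finally show "(X *\<^sub>v v) $ i = 0\<^sub>v m $ i" using i by simp
  qed (use X in simp)
  then have v0: "v = 0\<^sub>v n" using c v X unfolding colfull_def by auto
  have "v1 $ j = 0" if "j < s" for j
    using that sn arg_cong[OF v0, of "\<lambda>w. w $ j"] by (simp add: v_def)
  then show "v1 = 0\<^sub>v (dim_col TL)" using v1 by (intro eq_vecI) (auto simp: TL_def)
qed

end

lemma gj_identity:
  fixes Y :: "'a::field mat"
  assumes Y: "Y \<in> carrier_mat m n" and cY: "colfull Y"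
  shows "\<exists>P \<in> carrier_mat m m. invertible_mat P \<and> (\<forall>i<m. \<forall>j<n. (P * Y) $$ (i,j) = (if i = j then 1 else 0))"
proof -
  define C where "C = gauss_jordan_single Y"
  note gj = gauss_jordan_single[OF Y C_def[symmetric]]
  have C: "C \<in> carrier_mat m n" using gj(2) .
  have ref: "row_echelon_form C" using gj(3) .
  obtain P Q where PQ: "C = P * Y" "P \<in> carrier_mat m m" "Q \<in> carrier_mat m m" "P * Q = 1\<^sub>m m" "Q * P = 1\<^sub>m m"
    using gj(4) by blast
  have kerC: "x = 0\<^sub>v n" if "x \<in> carrier_vec n" "C *\<^sub>v x = 0\<^sub>v m" for x
    using that gj(1) cY Y unfolding colfull_def by auto
  from ref C obtain f where piv: "pivot_fun C f n" unfolding row_echelon_form_def by auto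
  have dim: "dim_row C = m" using C by simp
  note pD = pivot_funD[OF dim piv]
  have allpiv: "snd ` set (pivot_positions C) = {0..<n}"
  proof (rule ccontr)
    assume "snd ` set (pivot_positions C) \<noteq> {0..<n}"
    from find_base_vector[OF ref C this] kerC show False by auto
  qed
  let ?I = "{i. i < m \<and> f i \<noteq> n}"
  have setpp: "set (pivot_positions C) = {(i, f i) | i. i < m \<and> f i \<noteq> n}"
    using pivot_positions(1)[OF C piv] .
  have img: "f ` ?I = {0..<n}"
  proof -
    have "snd ` {(i, f i) | i. i < m \<and> f i \<noteq> n} = f ` ?I" by force
    then show ?thesis using allpiv setpp by simp
  qed
  have fge: "i \<le> f i" if "i < m" "f i \<noteq> n" for i
    using pivot_bound[OF dim piv, of 0 i] that by auto
  have Isub: "?I \<subseteq> {0..<n}"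
  proof
    fix i assume i: "i \<in> ?I"
    then have "f i < n" using pD(1)[of i] by auto
    then show "i \<in> {0..<n}" using fge[of i] i by auto
  qed
  have "card {0..<n} \<le> card ?I" using img card_image_le[of ?I f] by simp
  moreover have "card ?I \<le> card {0..<n}" using Isub by (intro card_mono) auto
  ultimately have Ieq: "?I = {0..<n}" using Isub by (intro card_subset_eq) auto
  have fid: "f i = i" if i: "i < n" for i
  proof -
    have iI: "i \<in> ?I" and lI: "n - 1 \<in> ?I" using Ieq i by auto
    then have "f (n - 1) < n" using pD(1)[of "n - 1"] by auto
    moreover have "i + (n - 1 - i) = n - 1" using i by auto
    moreover note pivot_bound[OF dim piv, of i "n - 1 - i"]
    ultimately have "f i \<le> i" using lI by auto
    then show ?thesis using fge[of i] iI by auto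
  qed
  have ent: "C $$ (i,j) = (if i = j then 1 else 0)" if ij: "i < m" "j < n" for i j
  proof -
    have jI: "j \<in> ?I" using Ieq ij by auto
    then have jm: "j < m" and fj: "f j < n" using fid ij by auto
    show ?thesis using pD(4)[OF jm fj] pD(5)[OF jm fj ij(1)] fid[OF ij(2)] by auto
  qed
  have "invertible_mat P" unfolding invertible_mat_def inverts_mat_def using PQ
    by (intro conjI exI[of _ Q]) auto
  then show ?thesis using PQ ent by auto
qed


definition NN :: "'a::field mat \<Rightarrow> 'a aci \<Rightarrow> nat set \<Rightarrow> 'a aci" where
  "NN R M F = aci_rmult (aci_lmult R M) (Qperm (aci_cols M) F)"

lemma aci_Bs: "is_aci M \<Longrightarrow> B \<in> set (snd M) \<Longrightarrow> B \<in> carrier_mat (aci_rows M) (aci_cols M)"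
  unfolding is_aci_def by auto

lemma aci_coefs: "is_aci M \<Longrightarrow> B \<in> set (fst M # snd M) \<Longrightarrow> B \<in> carrier_mat (aci_rows M) (aci_cols M)"
  by (metis aci_Bs fst_carrier set_ConsD)

lemma NN_facts:
  fixes M :: "'a::field aci"
  assumes aci: "is_aci M" and R: "R \<in> carrier_mat (aci_rows M) (aci_rows M)"
  shows "aci_rows (NN R M F) = aci_rows M" "aci_cols (NN R M F) = aci_cols M"
    "aci_eval (NN R M F) a = R * aci_eval M a * Qperm (aci_cols M) F"
    "fst (NN R M F) = R * fst M * Qperm (aci_cols M) F"
    "snd (NN R M F) = map (\<lambda>B. R * B * Qperm (aci_cols M) F) (snd M)"
proof -
  let ?m = "aci_rows M" and ?n = "aci_cols M"
  have Q: "(Qperm ?n F :: 'a mat) \<in> carrier_mat ?n ?n" unfolding Qperm_def by auto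
  show "aci_rows (NN R M F) = aci_rows M" "aci_cols (NN R M F) = aci_cols M"
    unfolding NN_def using R Q by auto
  show "fst (NN R M F) = R * fst M * Qperm (aci_cols M) F"
    "snd (NN R M F) = map (\<lambda>B. R * B * Qperm (aci_cols M) F) (snd M)"
    unfolding NN_def aci_rmult_def aci_lmult_def by auto
  have Bs: "\<forall>B\<in>set (snd M). B \<in> carrier_mat ?m ?n" using aci_Bs[OF aci] by auto
  have "aci_eval (aci_lmult R M) a = R * aci_eval M a"
    by (rule eval_lmult[OF R refl]) (use Bs in auto)
  moreover have "aci_eval (aci_rmult (aci_lmult R M) (Qperm ?n F)) a = aci_eval (aci_lmult R M) a * Qperm ?n F"
    by (rule eval_rmult[OF Q]) (use Bs R in \<open>auto simp: aci_lmult_def aci_rows_def aci_cols_def\<close>)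
  ultimately show "aci_eval (NN R M F) a = R * aci_eval M a * Qperm (aci_cols M) F"
    unfolding NN_def by simp
qed

lemma sf_unpack:
  fixes M :: "'a::field aci"
  assumes aci: "is_aci M" and nm: "aci_cols M \<le> aci_rows M" and sf: "semifactor_set M F"
  obtains R where "R \<in> carrier_mat (aci_rows M) (aci_rows M)" "invertible_mat R" "F \<subseteq> {0..<aci_cols M}"
   "\<And>i j. card F \<le> i \<Longrightarrow> i < aci_rows M \<Longrightarrow> j < card F \<Longrightarrow>
       fst (NN R M F) $$ (i,j) = 0 \<and> (\<forall>B\<in>set (snd (NN R M F)). B $$ (i,j) = 0)"
   "\<exists>a. colfull (aci_eval (aci_block (NN R M F) 0 (card F) 0 (card F)) a)"
   "\<exists>a. colfull (aci_eval (aci_block (NN R M F) (card F) (aci_rows M) (card F) (aci_cols M)) a)"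
proof -
  let ?m = "aci_rows M" and ?n = "aci_cols M" and ?s = "card F"
  from sf obtain R r where FS: "F \<subseteq> {0..<?n}" and R: "R \<in> carrier_mat ?m ?m" "invertible_mat R"
    and r: "r \<le> ?m" "r + ?s = max ?m ?n"
    and Z: "\<forall>i j. ?m - r \<le> i \<and> i < ?m \<and> j < ?s \<longrightarrow>
              fst (NN R M F) $$ (i, j) = 0 \<and> (\<forall>B \<in> set (snd (NN R M F)). B $$ (i, j) = 0)"
    and A: "FRmR (aci_block (NN R M F) 0 (?m - r) 0 ?s)"
    and C: "FCmR (aci_block (NN R M F) (?m - r) ?m ?s ?n)"
    unfolding semifactor_set_def Let_def NN_def by blast
  have mr: "?m - r = ?s" using r nm by auto
  have sn: "?s \<le> ?n" using FS by (metis card_atLeastLessThan card_mono diff_zero finite_atLeastLessThan)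
  note rows = NN_facts(1,2)[OF aci R(1)]
  have A': "\<exists>a. colfull (aci_eval (aci_block (NN R M F) 0 ?s 0 ?s) a)"
    using A FRmR_iff[of "aci_block (NN R M F) 0 ?s 0 ?s"] mr by auto
  have C': "\<exists>a. colfull (aci_eval (aci_block (NN R M F) ?s ?m ?s ?n) a)"
    using C FCmR_iff[of "aci_block (NN R M F) ?s ?m ?s ?n"] mr nm by auto
  show ?thesis using that[OF R FS _ A' C'] Z mr by auto
qed


lemma sf_colfull:
  fixes M :: "'a::field aci"
  assumes aci: "is_aci M" and nm: "aci_cols M \<le> aci_rows M" and sf: "semifactor_set M F"
  shows "\<exists>a. colfull (aci_eval M a)"
proof -
  let ?m = "aci_rows M" and ?n = "aci_cols M" and ?s = "card F"
  let ?c = "col_order ?n F" and ?Q = "Qperm ?n F :: 'a mat"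
  obtain R where R: "R \<in> carrier_mat ?m ?m" "invertible_mat R" and FS: "F \<subseteq> {0..<?n}"
    and Z: "\<And>i j. ?s \<le> i \<Longrightarrow> i < ?m \<Longrightarrow> j < ?s \<Longrightarrow>
       fst (NN R M F) $$ (i,j) = 0 \<and> (\<forall>B\<in>set (snd (NN R M F)). B $$ (i,j) = 0)"
    and A: "\<exists>a. colfull (aci_eval (aci_block (NN R M F) 0 ?s 0 ?s) a)"
    and C: "\<exists>a. colfull (aci_eval (aci_block (NN R M F) ?s ?m ?s ?n) a)"
    using sf_unpack[OF aci nm sf] by blast
  let ?N = "NN R M F"
  from A obtain a1 where a1: "colfull (aci_eval (aci_block ?N 0 ?s 0 ?s) a1)" by blast
  from C obtain a2 where a2: "colfull (aci_eval (aci_block ?N ?s ?m ?s ?n) a2)" by blast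
  have sn: "?s \<le> ?n" using FS by (metis card_atLeastLessThan card_mono diff_zero finite_atLeastLessThan)
  have Q: "?Q \<in> carrier_mat ?n ?n" using Q_carrier[OF FS] .
  note NF = NN_facts[OF aci R(1)]
  define cv where "cv v = (SOME j. \<forall>i<?m. \<forall>j'<?n. j' \<noteq> j \<longrightarrow> (snd M ! v) $$ (i,j') = 0)" for v
  have cvP: "(snd M ! v) $$ (i,j') = 0" if "v < length (snd M)" "i < ?m" "j' < ?n" "j' \<noteq> cv v" for v i j'
  proof -
    have "\<exists>j. \<forall>i<?m. \<forall>j'<?n. j' \<noteq> j \<longrightarrow> (snd M ! v) $$ (i,j') = 0"
      using aci that(1) unfolding is_aci_def by auto
    from someI_ex[OF this] show ?thesis using that unfolding cv_def by blast
  qed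
  define a where "a v = (if cv v \<in> F then a1 v else a2 v)" for v
  have Bv: "snd M ! v \<in> carrier_mat ?m ?n" if "v < length (snd M)" for v
    using aci_Bs[OF aci] that by auto
  have snd_entry: "(snd ?N ! v) $$ (i,j) = (R * snd M ! v) $$ (i, ?c ! j)"
    if "v < length (snd M)" "i < ?m" "j < ?n" for v i j
    using NF(5) mult_Q_index[OF FS, of "R * snd M ! v" ?m i j] that R Bv by auto
  have RB0: "(R * snd M ! v) $$ (i, ?c ! j) = 0"
    if "v < length (snd M)" "i < ?m" "j < ?n" "?c ! j \<noteq> cv v" for v i j
  proof -
    have cj: "?c ! j < ?n" using co_lt[OF FS that(3)] .
    have "(R * snd M ! v) $$ (i, ?c ! j) = (\<Sum>k\<in>{0..<?m}. R $$ (i,k) * (snd M ! v) $$ (k, ?c ! j))"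
      using mult_index_sum[OF R(1) Bv[OF that(1)] that(2) cj] .
    also have "\<dots> = 0" using cvP[OF that(1) _ cj that(4)] by simp
    finally show ?thesis .
  qed
  have agree: "aci_eval ?N a $$ (i,j) = aci_eval ?N (if j < ?s then a1 else a2) $$ (i,j)"
    if ij: "i < ?m" "j < ?n" for i j
  proof -
    have "aci_eval ?N a $$ (i,j) = fst ?N $$ (i,j) + (\<Sum>v<length (snd ?N). a v * (snd ?N ! v) $$ (i,j))"
      using ij NF by (intro eval_index) auto
    also have "\<dots> = fst ?N $$ (i,j) + (\<Sum>v<length (snd ?N). (if j < ?s then a1 else a2) v * (snd ?N ! v) $$ (i,j))"
    proof (intro arg_cong2[where f="(+)"] refl sum.cong)
      fix v assume "v \<in> {..<length (snd ?N)}"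
      then have v: "v < length (snd M)" using NF(5) by simp
      show "a v * (snd ?N ! v) $$ (i,j) = (if j < ?s then a1 else a2) v * (snd ?N ! v) $$ (i,j)"
      proof (cases "?c ! j = cv v")
        case True
        then have "a v = (if j < ?s then a1 else a2) v"
          using co_in[OF FS, of j] co_notin[OF FS, of j] ij unfolding a_def by auto
        then show ?thesis by simp
      next
        case False
        then show ?thesis using snd_entry[OF v ij] RB0[OF v ij] by simp
      qed
    qed
    also have "\<dots> = aci_eval ?N (if j < ?s then a1 else a2) $$ (i,j)"
      using ij NF by (intro eval_index[symmetric]) auto
    finally show ?thesis .
  qed
  define X' where "X' = aci_eval ?N a"
  have X': "X' \<in> carrier_mat ?m ?n" unfolding X'_def using eval_carrier[of ?N a] NF by simp
  have Z': "X' $$ (i,j) = 0" if "?s \<le> i" "i < ?m" "j < ?s" for i j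
  proof -
    have "X' $$ (i,j) = fst ?N $$ (i,j) + (\<Sum>v<length (snd ?N). a v * (snd ?N ! v) $$ (i,j))"
      unfolding X'_def using that sn NF by (intro eval_index) auto
    also have "\<dots> = 0" using Z[OF that] by simp
    finally show ?thesis .
  qed
  have TLeq: "TL X' ?s = aci_eval (aci_block ?N 0 ?s 0 ?s) a1"
  proof (rule eq_matI)
    fix i j assume "i < dim_row (aci_eval (aci_block ?N 0 ?s 0 ?s) a1)" "j < dim_col (aci_eval (aci_block ?N 0 ?s 0 ?s) a1)"
    then have ij: "i < ?s" "j < ?s" by auto
    have "TL X' ?s $$ (i,j) = X' $$ (i,j)" using TL_def[OF X' sn nm Z'] ij by simp
    also have "\<dots> = aci_eval ?N a1 $$ (i,j)" unfolding X'_def using agree[of i j] ij sn nm by auto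
    also have "\<dots> = aci_eval (aci_block ?N 0 ?s 0 ?s) a1 $$ (i,j)"
      using eval_block[of i ?s 0 j ?s 0 ?N a1] ij sn nm NF by auto
    finally show "TL X' ?s $$ (i,j) = aci_eval (aci_block ?N 0 ?s 0 ?s) a1 $$ (i,j)" .
  qed (use TL_def[OF X' sn nm Z'] in auto)
  have BReq: "BR X' ?m ?n ?s = aci_eval (aci_block ?N ?s ?m ?s ?n) a2"
  proof (rule eq_matI)
    fix i j assume "i < dim_row (aci_eval (aci_block ?N ?s ?m ?s ?n) a2)" "j < dim_col (aci_eval (aci_block ?N ?s ?m ?s ?n) a2)"
    then have ij: "i < ?m - ?s" "j < ?n - ?s" by auto
    have "BR X' ?m ?n ?s $$ (i,j) = X' $$ (i + ?s, j + ?s)" using BR_def[OF X' sn nm Z'] ij by simp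
    also have "\<dots> = aci_eval ?N a2 $$ (i + ?s, j + ?s)" unfolding X'_def using agree[of "i + ?s" "j + ?s"] ij by auto
    also have "\<dots> = aci_eval (aci_block ?N ?s ?m ?s ?n) a2 $$ (i,j)"
      using eval_block[of i ?m ?s j ?n ?s ?N a2] ij NF by auto
    finally show "BR X' ?m ?n ?s $$ (i,j) = aci_eval (aci_block ?N ?s ?m ?s ?n) a2 $$ (i,j)" .
  qed (use BR_def[OF X' sn nm Z'] in auto)
  have cX': "colfull X'"
    using colfull_blocks[OF X' sn nm Z'] a1 a2 TLeq BReq by simp
  have X'eq: "X' = (R * aci_eval M a) * ?Q" unfolding X'_def using NF(3) .
  have RE: "R * aci_eval M a \<in> carrier_mat ?m ?n" using R eval_carrier by auto
  have "colfull (R * aci_eval M a)"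
    using colfull_right[OF Q _ QQt[OF FS] QtQ[OF FS] RE] cX' X'eq Q by auto
  moreover obtain S where S: "S \<in> carrier_mat ?m ?m" "S * R = 1\<^sub>m ?m" using invertible_inv[OF R] by blast
  ultimately have "colfull (aci_eval M a)" using colfull_left[OF R(1) S eval_carrier] by simp
  then show ?thesis by blast
qed


lemma sf_span:
  fixes M :: "'a::field aci"
  assumes aci: "is_aci M" and nm: "aci_cols M \<le> aci_rows M" and sf: "semifactor_set M F"
    and cX: "colfull (aci_eval M a0)"
    and B: "B \<in> set (fst M # snd M)" and f: "f \<in> F"
  shows "\<exists>y \<in> carrier_vec (aci_cols M). (\<forall>i<aci_cols M. i \<notin> F \<longrightarrow> y $ i = 0) \<and>
           aci_eval M a0 *\<^sub>v y = col B f"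
proof -
  let ?m = "aci_rows M" and ?n = "aci_cols M" and ?s = "card F"
  let ?c = "col_order ?n F" and ?Q = "Qperm ?n F :: 'a mat"
  obtain R where R: "R \<in> carrier_mat ?m ?m" "invertible_mat R" and FS: "F \<subseteq> {0..<?n}"
    and Z: "\<And>i j. ?s \<le> i \<Longrightarrow> i < ?m \<Longrightarrow> j < ?s \<Longrightarrow>
       fst (NN R M F) $$ (i,j) = 0 \<and> (\<forall>B\<in>set (snd (NN R M F)). B $$ (i,j) = 0)"
    and "\<exists>a. colfull (aci_eval (aci_block (NN R M F) 0 ?s 0 ?s) a)"
    and "\<exists>a. colfull (aci_eval (aci_block (NN R M F) ?s ?m ?s ?n) a)"
    using sf_unpack[OF aci nm sf] by blast
  let ?N = "NN R M F"
  let ?X = "aci_eval M a0"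
  have sn: "?s \<le> ?n" using FS by (metis card_atLeastLessThan card_mono diff_zero finite_atLeastLessThan)
  have Q: "?Q \<in> carrier_mat ?n ?n" using Q_carrier[OF FS] .
  note NF = NN_facts[OF aci R(1)]
  obtain S where S: "S \<in> carrier_mat ?m ?m" "S * R = 1\<^sub>m ?m" using invertible_inv[OF R] by blast
  have X: "?X \<in> carrier_mat ?m ?n" using eval_carrier .
  define X' where "X' = aci_eval ?N a0"
  have X': "X' \<in> carrier_mat ?m ?n" unfolding X'_def using eval_carrier[of ?N a0] NF by simp
  have X'eq: "X' = (R * ?X) * ?Q" unfolding X'_def using NF(3) .
  have RE: "R * ?X \<in> carrier_mat ?m ?n" using R X by auto
  have "colfull (R * ?X)" using colfull_left[OF R(1) S X] cX by simp
  then have cX': "colfull X'"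
    using colfull_right[OF Q _ QQt[OF FS] QtQ[OF FS] RE] X'eq Q by auto
  have Z': "X' $$ (i,j) = 0" if "?s \<le> i" "i < ?m" "j < ?s" for i j
  proof -
    have "X' $$ (i,j) = fst ?N $$ (i,j) + (\<Sum>v<length (snd ?N). a0 v * (snd ?N ! v) $$ (i,j))"
      unfolding X'_def using that sn NF by (intro eval_index) auto
    also have "\<dots> = 0" using Z[OF that] by simp
    finally show ?thesis .
  qed
  have cTL: "colfull (TL X' ?s)" using colfull_TL[OF X' sn nm Z' cX'] .
  have TLc: "TL X' ?s \<in> carrier_mat ?s ?s" using TL_def[OF X' sn nm Z'] by simp
  have Bc: "B \<in> carrier_mat ?m ?n" using aci_coefs[OF aci B] .
  obtain j where j: "j < ?s" "?c ! j = f" using co_surj[OF FS f] by blast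
  have fn: "f < ?n" using f FS by auto
  define w where "w = col B f"
  have w: "w \<in> carrier_vec ?m" unfolding w_def using col_dim[of B f] Bc by (metis carrier_matD(1))
  have Rw: "(R *\<^sub>v w) $ i = (R * B * ?Q) $$ (i, j)" if "i < ?m" for i
  proof -
    have "(R * B * ?Q) $$ (i, j) = (R * B) $$ (i, f)"
      using mult_Q_index[OF FS, of "R * B" ?m i j] R Bc that j sn by auto
    also have "\<dots> = (R *\<^sub>v w) $ i" unfolding w_def using R Bc that fn by simp
    finally show ?thesis by simp
  qed
  have Rw0: "(R *\<^sub>v w) $ i = 0" if "?s \<le> i" "i < ?m" for i
  proof -
    have "(R * B * ?Q) $$ (i, j) = 0"
    proof (cases "B = fst M")
      case True
      then show ?thesis using Z[OF that j(1)] NF(4) by simp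
    next
      case False
      then have "B \<in> set (snd M)" using B by simp
      then have "R * B * ?Q \<in> set (snd ?N)" using NF(5) by simp
      then show ?thesis using Z[OF that j(1)] by blast
    qed
    then show ?thesis using Rw[OF that(2)] by simp
  qed
  define u where "u = vec ?s (\<lambda>i. (R *\<^sub>v w) $ i)"
  obtain z' where z': "z' \<in> carrier_vec ?s" "TL X' ?s *\<^sub>v z' = u"
    using colfull_surj[OF TLc cTL, of u] unfolding u_def by auto
  define z where "z = vec ?n (\<lambda>j. if j < ?s then z' $ j else 0)"
  have z: "z \<in> carrier_vec ?n" unfolding z_def by simp
  have X'z: "X' *\<^sub>v z = R *\<^sub>v w"
  proof (rule eq_vecI)
    fix i assume "i < dim_vec (R *\<^sub>v w)"
    then have i: "i < ?m" using R by simp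
    have "(X' *\<^sub>v z) $ i = (\<Sum>j\<in>{0..<?s}. X' $$ (i,j) * z' $ j)"
      using Xv_sum[OF X' sn nm Z' z i] sn by (simp add: z_def)
    also have "\<dots> = (R *\<^sub>v w) $ i"
    proof (cases "i < ?s")
      case True
      have "(TL X' ?s *\<^sub>v z') $ i = (\<Sum>j\<in>{0..<?s}. X' $$ (i,j) * z' $ j)"
        using True z' TLc by (subst mult_vec_sum[OF TLc z'(1) True]) (simp add: TL_def[OF X' sn nm Z'])
      then show ?thesis using z'(2) True unfolding u_def by simp
    next
      case False
      then show ?thesis using Z' i Rw0 by simp
    qed
    finally show "(X' *\<^sub>v z) $ i = (R *\<^sub>v w) $ i" .
  qed (use X' R in simp)
  define y where "y = ?Q *\<^sub>v z"
  have y: "y \<in> carrier_vec ?n" unfolding y_def using Q z by simp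
  have Qz: "?Q *\<^sub>v z \<in> carrier_vec ?n" using Q z by simp
  have "R *\<^sub>v (?X *\<^sub>v y) = (R * ?X) *\<^sub>v (?Q *\<^sub>v z)"
    unfolding y_def using R(1) X Qz by (rule assoc_mult_mat_vec[symmetric])
  also have "\<dots> = ((R * ?X) * ?Q) *\<^sub>v z"
    using RE Q z by (rule assoc_mult_mat_vec[symmetric])
  also have "\<dots> = R *\<^sub>v w" using X'z X'eq by simp
  finally have "R *\<^sub>v (?X *\<^sub>v y) = R *\<^sub>v w" .
  note eq = this
  have Xyc: "?X *\<^sub>v y \<in> carrier_vec ?m" using X y by simp
  have "?X *\<^sub>v y = (S * R) *\<^sub>v (?X *\<^sub>v y)" using S(2) Xyc by simp
  also have "\<dots> = S *\<^sub>v (R *\<^sub>v (?X *\<^sub>v y))" using S(1) R(1) Xyc by (rule assoc_mult_mat_vec)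
  also have "\<dots> = S *\<^sub>v (R *\<^sub>v w)" using eq by simp
  also have "\<dots> = (S * R) *\<^sub>v w" using S(1) R(1) w by (rule assoc_mult_mat_vec[symmetric])
  also have "\<dots> = w" using S(2) w by simp
  finally have Xy: "?X *\<^sub>v y = w" .
  have supp: "y $ i = 0" if "i < ?n" "i \<notin> F" for i
  proof -
    have "y $ i = (\<Sum>j\<in>{0..<?n}. if i = ?c ! j then z $ j else 0)"
      unfolding y_def using Q_vec[OF FS z that(1)] .
    also have "\<dots> = 0"
    proof (rule sum.neutral, intro ballI)
      fix j assume "j \<in> {0..<?n}"
      then show "(if i = ?c ! j then z $ j else 0) = 0"
        using co_in[OF FS, of j] that(2) by (auto simp: z_def)
    qed
    finally show ?thesis .
  qed
  show ?thesis using y supp Xy unfolding w_def by blast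
qed


lemma delta_colfull:
  fixes A :: "'a::field mat"
  assumes A: "A \<in> carrier_mat p q" and qp: "q \<le> p"
    and D: "\<And>i j. i < p \<Longrightarrow> j < q \<Longrightarrow> A $$ (i,j) = (if i = j then 1 else 0)"
  shows "colfull A"
  unfolding colfull_def
proof (intro ballI impI)
  fix v assume v: "v \<in> carrier_vec (dim_col A)" and Av: "A *\<^sub>v v = 0\<^sub>v (dim_row A)"
  have "v $ i = 0" if i: "i < q" for i
  proof -
    have vq: "v \<in> carrier_vec q" using v A by simp
    have "(A *\<^sub>v v) $ i = (\<Sum>k\<in>{0..<q}. A $$ (i,k) * v $ k)"
      using i qp by (intro mult_vec_sum[OF A vq]) auto
    also have "\<dots> = (\<Sum>k\<in>{0..<q}. if k = i then v $ k else 0)"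
      using D i qp by (intro sum.cong) auto
    also have "\<dots> = v $ i" using i by simp
    finally show ?thesis using Av i qp A by simp
  qed
  then show "v = 0\<^sub>v (dim_col A)" using v A by (intro eq_vecI) auto
qed

lemma span_sf:
  fixes M :: "'a::field aci"
  assumes aci: "is_aci M" and nm: "aci_cols M \<le> aci_rows M" and GS: "G \<subseteq> {0..<aci_cols M}"
    and cX: "colfull (aci_eval M a0)"
    and span: "\<And>B g. B \<in> set (fst M # snd M) \<Longrightarrow> g \<in> G \<Longrightarrow>
        \<exists>y \<in> carrier_vec (aci_cols M). (\<forall>i<aci_cols M. i \<notin> G \<longrightarrow> y $ i = 0) \<and> aci_eval M a0 *\<^sub>v y = col B g"
  shows "semifactor_set M G"
proof -
  let ?m = "aci_rows M" and ?n = "aci_cols M" and ?s = "card G"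
  let ?c = "col_order ?n G" and ?Q = "Qperm ?n G :: 'a mat"
  let ?X = "aci_eval M a0"
  have sn: "?s \<le> ?n" using GS by (metis card_atLeastLessThan card_mono diff_zero finite_atLeastLessThan)
  have Q: "?Q \<in> carrier_mat ?n ?n" using Q_carrier[OF GS] .
  have Qt: "transpose_mat ?Q \<in> carrier_mat ?n ?n" using Q by simp
  have X: "?X \<in> carrier_mat ?m ?n" using eval_carrier .
  have Y: "?X * ?Q \<in> carrier_mat ?m ?n" using X Q by simp
  have cY: "colfull (?X * ?Q)" using colfull_right[OF Q Qt QQt[OF GS] QtQ[OF GS] X] cX by simp
  obtain P where P: "P \<in> carrier_mat ?m ?m" "invertible_mat P"
    and PY: "\<And>i j. i < ?m \<Longrightarrow> j < ?n \<Longrightarrow> (P * (?X * ?Q)) $$ (i,j) = (if i = j then 1 else 0)"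
    using gj_identity[OF Y cY] by blast
  note NF = NN_facts[OF aci P(1)]
  let ?N = "NN P M G"
  have PYc: "P * (?X * ?Q) \<in> carrier_mat ?m ?n" using P Y by simp
  have key: "(P * B * ?Q) $$ (i,j) = 0"
    if B: "B \<in> set (fst M # snd M)" and ij: "?s \<le> i" "i < ?m" "j < ?s" for B i j
  proof -
    have Bc: "B \<in> carrier_mat ?m ?n" using aci_coefs[OF aci B] .
    have jn: "j < ?n" using ij sn by simp
    define g where "g = ?c ! j"
    have g: "g \<in> G" "g < ?n" unfolding g_def using co_in[OF GS ij(3)] co_lt[OF GS jn] by auto
    obtain y where y: "y \<in> carrier_vec ?n" "\<And>i. i < ?n \<Longrightarrow> i \<notin> G \<Longrightarrow> y $ i = 0" "?X *\<^sub>v y = col B g"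
      using span[OF B g(1)] by blast
    have "(P * B * ?Q) $$ (i,j) = (P * B) $$ (i, g)"
      unfolding g_def using mult_Q_index[OF GS, of "P * B" ?m i j] P Bc ij jn by auto
    also have "\<dots> = (P *\<^sub>v col B g) $ i" using P Bc ij g by simp
    also have "\<dots> = (P *\<^sub>v (?X *\<^sub>v y)) $ i" using y(3) by simp
    also have "?X *\<^sub>v y = ?X *\<^sub>v (?Q *\<^sub>v (transpose_mat ?Q *\<^sub>v y))"
    proof -
      have "?Q *\<^sub>v (transpose_mat ?Q *\<^sub>v y) = (?Q * transpose_mat ?Q) *\<^sub>v y"
        using Q Qt y(1) by (rule assoc_mult_mat_vec[symmetric])
      also have "\<dots> = y" unfolding QQt[OF GS] using y(1) by simp
      finally show ?thesis by simp
    qed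
    also have "P *\<^sub>v (?X *\<^sub>v (?Q *\<^sub>v (transpose_mat ?Q *\<^sub>v y))) = (P * (?X * ?Q)) *\<^sub>v (transpose_mat ?Q *\<^sub>v y)"
    proof -
      have u: "transpose_mat ?Q *\<^sub>v y \<in> carrier_vec ?n" using Qt y(1) by simp
      have "(P * (?X * ?Q)) *\<^sub>v (transpose_mat ?Q *\<^sub>v y) = P *\<^sub>v ((?X * ?Q) *\<^sub>v (transpose_mat ?Q *\<^sub>v y))"
        using P(1) Y u by (rule assoc_mult_mat_vec)
      also have "(?X * ?Q) *\<^sub>v (transpose_mat ?Q *\<^sub>v y) = ?X *\<^sub>v (?Q *\<^sub>v (transpose_mat ?Q *\<^sub>v y))"
        using X Q u by (rule assoc_mult_mat_vec)
      finally show ?thesis by simp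
    qed
    also have "((P * (?X * ?Q)) *\<^sub>v (transpose_mat ?Q *\<^sub>v y)) $ i =
        (\<Sum>k\<in>{0..<?n}. (P * (?X * ?Q)) $$ (i,k) * (transpose_mat ?Q *\<^sub>v y) $ k)"
      using PYc Qt y(1) ij by (intro mult_vec_sum) auto
    also have "\<dots> = (\<Sum>k\<in>{0..<?n}. (if i = k then 1 else 0) * y $ (?c ! k))"
      using PY ij Qt_vec[OF GS y(1)] by (intro sum.cong) auto
    also have "\<dots> = 0"
    proof (rule sum.neutral, intro ballI)
      fix k assume k: "k \<in> {0..<?n}"
      show "(if i = k then 1 else 0) * y $ (?c ! k) = 0"
      proof (cases "i = k")
        case True
        then have "?c ! k \<notin> G" "?c ! k < ?n" using co_notin[OF GS, of k] co_lt[OF GS, of k] k ij by auto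
        then show ?thesis using y(2) by simp
      qed simp
    qed
    finally show ?thesis .
  qed
  have Zc: "fst ?N $$ (i,j) = 0 \<and> (\<forall>B\<in>set (snd ?N). B $$ (i,j) = 0)"
    if "?s \<le> i" "i < ?m" "j < ?s" for i j
    using key[OF _ that] NF(4,5) by auto
  have NX: "aci_eval ?N a0 $$ (i,j) = (if i = j then 1 else 0)" if "i < ?m" "j < ?n" for i j
  proof -
    have "aci_eval ?N a0 = P * (?X * ?Q)" using NF(3) P X Q by (simp add: assoc_mult_mat)
    then show ?thesis using PY that by simp
  qed
  have A: "FRmR (aci_block ?N 0 (?m - (?m - ?s)) 0 ?s)"
  proof -
    have mm: "?m - (?m - ?s) = ?s" using sn nm by auto
    have "colfull (aci_eval (aci_block ?N 0 ?s 0 ?s) a0)"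
    proof (rule delta_colfull[OF eval_carrier])
      fix i j assume "i < aci_rows (aci_block ?N 0 ?s 0 ?s)" "j < aci_cols (aci_block ?N 0 ?s 0 ?s)"
      then have ij: "i < ?s" "j < ?s" by auto
      show "aci_eval (aci_block ?N 0 ?s 0 ?s) a0 $$ (i,j) = (if i = j then 1 else 0)"
        using eval_block[of i ?s 0 j ?s 0 ?N a0] NX[of i j] ij sn nm NF(1,2) by auto
    qed auto
    then show ?thesis using FRmR_iff[of "aci_block ?N 0 ?s 0 ?s"] mm by auto
  qed
  have C: "FCmR (aci_block ?N (?m - (?m - ?s)) ?m ?s ?n)"
  proof -
    have mm: "?m - (?m - ?s) = ?s" using sn nm by auto
    have "colfull (aci_eval (aci_block ?N ?s ?m ?s ?n) a0)"
    proof (rule delta_colfull[OF eval_carrier])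
      fix i j assume "i < aci_rows (aci_block ?N ?s ?m ?s ?n)" "j < aci_cols (aci_block ?N ?s ?m ?s ?n)"
      then have ij: "i < ?m - ?s" "j < ?n - ?s" by auto
      show "aci_eval (aci_block ?N ?s ?m ?s ?n) a0 $$ (i,j) = (if i = j then 1 else 0)"
        using eval_block[of i ?m ?s j ?n ?s ?N a0] NX[of "i + ?s" "j + ?s"] ij NF(1,2) by auto
    qed (use nm in auto)
    then show ?thesis using FCmR_iff[of "aci_block ?N ?s ?m ?s ?n"] mm nm by auto
  qed
  have r: "?m - ?s \<le> ?m" "(?m - ?s) + ?s = max ?m ?n" using sn nm by auto
  have mm: "?m - (?m - ?s) = ?s" using sn nm by auto
  have ex: "\<exists>R r. R \<in> carrier_mat ?m ?m \<and> invertible_mat R \<and> r \<le> ?m \<and> r + ?s = max ?m ?n \<and>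
     (\<forall>i j. ?m - r \<le> i \<and> i < ?m \<and> j < ?s \<longrightarrow>
        fst (NN R M G) $$ (i, j) = 0 \<and> (\<forall>B\<in>set (snd (NN R M G)). B $$ (i, j) = 0)) \<and>
     FRmR (aci_block (NN R M G) 0 (?m - r) 0 ?s) \<and> FCmR (aci_block (NN R M G) (?m - r) ?m ?s ?n)"
    apply (rule exI[of _ P], rule exI[of _ "?m - ?s"])
    using P r A C Zc unfolding mm by auto
  show ?thesis unfolding semifactor_set_def Let_def
    by (rule conjI[OF GS ex[unfolded NN_def]])
qed


lemma sf_subset: "semifactor_set M F \<Longrightarrow> F \<subseteq> {0..<aci_cols M}"
  unfolding semifactor_set_def Let_def by blast

theorem theorem5p4:
  fixes M :: "'a::field aci" and F1 F2 :: "nat set"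
  assumes "is_aci M"
    and "aci_cols M \<le> aci_rows M"
    and "semifactor_set M F1" and "semifactor_set M F2"
    and "F1 \<inter> F2 = {}"
  shows "semifactor_set M (F1 \<inter> F2) \<and> semifactor_set M (F1 \<union> F2)"
proof -
  note aci = assms(1) and nm = assms(2) and sf1 = assms(3) and sf2 = assms(4)
  obtain a0 where cX: "colfull (aci_eval M a0)" using sf_colfull[OF aci nm sf1] by blast
  have "semifactor_set M {}"
    by (rule span_sf[OF aci nm _ cX]) auto
  then have I: "semifactor_set M (F1 \<inter> F2)" using assms(5) by simp
  have GS: "F1 \<union> F2 \<subseteq> {0..<aci_cols M}" using sf_subset[OF sf1] sf_subset[OF sf2] by blast
  have U: "semifactor_set M (F1 \<union> F2)"
  proof (rule span_sf[OF aci nm GS cX])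
    fix B g assume B: "B \<in> set (fst M # snd M)" and g: "g \<in> F1 \<union> F2"
    show "\<exists>y \<in> carrier_vec (aci_cols M). (\<forall>i<aci_cols M. i \<notin> F1 \<union> F2 \<longrightarrow> y $ i = 0) \<and>
        aci_eval M a0 *\<^sub>v y = col B g"
    proof (cases "g \<in> F1")
      case True
      from sf_span[OF aci nm sf1 cX B True] show ?thesis by blast
    next
      case False
      then have "g \<in> F2" using g by simp
      from sf_span[OF aci nm sf2 cX B this] show ?thesis by blast
    qed
  qed
  show ?thesis using I U by blast
qed


end
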